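(* Let $\mathcal{H}$ be a hypertree, $B$ a basic set of $\mathcal{H}$, and $u,v$ elements of $B$ lying in different connected components of the 2-section of $\overline{\mathcal{H}_B}$. Then $B=\bigcup_{T\in\tau(\mathcal{H})} V(T[u,v])$, where $\tau(\mathcal{H})$ is the set of all host trees of $\mathcal{H}$ and $T[u,v]$ is the path from $u$ to $v$ in $T$.
   Context: A hypergraph $\mathcal{H}$ has a finite vertex set $V(\mathcal{H})$ and a finite family of nonempty subsets (edges). A host tree is a tree on $V(\mathcal{H})$ in which every edge induces a connected subgraph; a hypertree is a hypergraph with a host tree. For $A\subseteq V(\mathcal{H})$, $\overline{\mathcal{H}_A}$ is the hypergraph on $V(\mathcal{H})$ whose edges are the edges of $\mathcal{H}$ not containing $A$. The 2-section of a hypergraph is the graph on its vertices where two distinct vertices are adjacent iff some edge contains both. A union of sets is connected if the intersection graph of the sets is connected. $Comp(\mathcal{H})$ is the hypergraph without repeated edges on $V(\mathcal{H})$ whose edges are $V(\mathcal{H})$, all singletons, and all proper subsets obtainable from edges of $\mathcal{H}$ by repeated nonempty intersections and connected unions; a basic set is an edge of $Comp(\mathcal{H})$ with more than one vertex that is not a connected union of strictly smaller edges of $Comp(\mathcal{H})$. *)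

theory Defs
  imports Main
begin

definition hypergraph :: "'a set \<Rightarrow> 'a set set \<Rightarrow> bool" where
  "hypergraph V E \<longleftrightarrow> finite V \<and> finite E \<and> (\<forall>e\<in>E. e \<noteq> {} \<and> e \<subseteq> V)"

(* Graphs on V: sets of undirected edges {x,y}, x \<noteq> y. *)
definition adj_in :: "'a set set \<Rightarrow> 'a set \<Rightarrow> ('a \<times> 'a) set" where
  "adj_in G S = {(x,y). {x,y} \<in> G \<and> x \<in> S \<and> y \<in> S}"

definition connected_in :: "'a set set \<Rightarrow> 'a set \<Rightarrow> bool" where
  "connected_in G S \<longleftrightarrow> (\<forall>x\<in>S. \<forall>y\<in>S. (x,y) \<in> (adj_in G S)\<^sup>*)"

definition simple_graph :: "'a set \<Rightarrow> 'a set set \<Rightarrow> bool" where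
  "simple_graph V G \<longleftrightarrow> (\<forall>e\<in>G. \<exists>x y. x \<noteq> y \<and> e = {x,y} \<and> x \<in> V \<and> y \<in> V)"

(* acyclic: no edge lies on a cycle, i.e. removing any edge disconnects its endpoints *)
definition acyclic_graph :: "'a set \<Rightarrow> 'a set set \<Rightarrow> bool" where
  "acyclic_graph V G \<longleftrightarrow>
     (\<forall>x y. {x,y} \<in> G \<longrightarrow> (x,y) \<notin> (adj_in (G - {{x,y}}) V)\<^sup>*)"

definition is_tree :: "'a set \<Rightarrow> 'a set set \<Rightarrow> bool" where
  "is_tree V T \<longleftrightarrow> simple_graph V T \<and> connected_in T V \<and> acyclic_graph V T"

definition host_tree :: "'a set \<Rightarrow> 'a set set \<Rightarrow> 'a set set \<Rightarrow> bool" where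
  "host_tree V E T \<longleftrightarrow> is_tree V T \<and> (\<forall>e\<in>E. connected_in T e)"

definition hypertree :: "'a set \<Rightarrow> 'a set set \<Rightarrow> bool" where
  "hypertree V E \<longleftrightarrow> hypergraph V E \<and> (\<exists>T. host_tree V E T)"

definition is_path :: "'a set set \<Rightarrow> 'a list \<Rightarrow> 'a \<Rightarrow> 'a \<Rightarrow> bool" where
  "is_path G p u v \<longleftrightarrow> p \<noteq> [] \<and> hd p = u \<and> last p = v \<and> distinct p \<and>
     (\<forall>i. Suc i < length p \<longrightarrow> {p ! i, p ! Suc i} \<in> G)"

(* vertex set of the (unique, in a tree) path from u to v *)
definition path_verts :: "'a set set \<Rightarrow> 'a \<Rightarrow> 'a \<Rightarrow> 'a set" where
  "path_verts G u v = {w. \<exists>p. is_path G p u v \<and> w \<in> set p}"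

(* edges of H-bar_A: edges not containing A *)
definition edges_not_containing :: "'a set set \<Rightarrow> 'a set \<Rightarrow> 'a set set" where
  "edges_not_containing E A = {e \<in> E. \<not> A \<subseteq> e}"

definition two_section :: "'a set set \<Rightarrow> 'a set set" where
  "two_section E = {{x,y} | x y. x \<noteq> y \<and> (\<exists>e\<in>E. x \<in> e \<and> y \<in> e)}"

definition inter_connected :: "'a set set \<Rightarrow> bool" where
  "inter_connected F \<longleftrightarrow>
     (\<forall>A\<in>F. \<forall>B\<in>F. (A,B) \<in> {(X,Y). X \<in> F \<and> Y \<in> F \<and> X \<inter> Y \<noteq> {}}\<^sup>*)"

inductive_set comp_gen :: "'a set set \<Rightarrow> 'a set set" for E where
  base: "e \<in> E \<Longrightarrow> e \<in> comp_gen E"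
| inter: "A \<in> comp_gen E \<Longrightarrow> B \<in> comp_gen E \<Longrightarrow> A \<inter> B \<noteq> {} \<Longrightarrow> A \<inter> B \<in> comp_gen E"
| union: "F \<in> Pow (comp_gen E) \<Longrightarrow> finite F \<Longrightarrow> F \<noteq> {} \<Longrightarrow> inter_connected F \<Longrightarrow> \<Union>F \<in> comp_gen E"
monos Pow_mono

definition Comp :: "'a set \<Rightarrow> 'a set set \<Rightarrow> 'a set set" where
  "Comp V E = {V} \<union> {{x} | x. x \<in> V} \<union> {S \<in> comp_gen E. S \<subset> V}"

definition basic_set :: "'a set \<Rightarrow> 'a set set \<Rightarrow> 'a set \<Rightarrow> bool" where
  "basic_set V E B \<longleftrightarrow> B \<in> Comp V E \<and> card B > 1 \<and>
     \<not> (\<exists>F. F \<subseteq> {S \<in> Comp V E. S \<subset> B} \<and> F \<noteq> {} \<and> inter_connected F \<and> \<Union>F = B)"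

end

theory Submission imports Defs begin

lemma is_path_succ:
  "is_path G p u v \<longleftrightarrow> p \<noteq> [] \<and> hd p = u \<and> last p = v \<and> distinct p \<and>
     successively (\<lambda>a b. {a,b} \<in> G) p"
  unfolding is_path_def successively_conv_nth by simp

lemma sym_adj: "sym (adj_in G S)"
  unfolding adj_in_def sym_def by (auto simp: insert_commute)

lemma rt_sym: "(a,b) \<in> (adj_in G S)\<^sup>* \<Longrightarrow> (b,a) \<in> (adj_in G S)\<^sup>*"
  by (metis sym_adj sym_rtrancl symD)

lemma adj_mono: "G \<subseteq> G' \<Longrightarrow> S \<subseteq> S' \<Longrightarrow> adj_in G S \<subseteq> adj_in G' S'"
  unfolding adj_in_def by auto

lemma rt_mono: "G \<subseteq> G' \<Longrightarrow> S \<subseteq> S' \<Longrightarrow> (a,b) \<in> (adj_in G S)\<^sup>* \<Longrightarrow> (a,b) \<in> (adj_in G' S')\<^sup>*"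
  using rtrancl_mono[OF adj_mono] by (metis subsetD)

lemma add_edge_gen:
  assumes "sym R" "(a,b) \<in> (R \<union> {(c,d),(d,c)})\<^sup>*"
  shows "(a,b) \<in> R\<^sup>* \<or> ((a,c) \<in> R\<^sup>* \<and> (d,b) \<in> R\<^sup>*) \<or> ((a,d) \<in> R\<^sup>* \<and> (c,b) \<in> R\<^sup>*)"
  using assms(2)
proof (induction rule: rtrancl_induct)
  case base
  then show ?case by simp
next
  case (step y z)
  have s: "\<And>x y. (x,y) \<in> R\<^sup>* \<Longrightarrow> (y,x) \<in> R\<^sup>*" by (meson assms(1) sym_rtrancl symD)
  from step.hyps(2) consider "(y,z) \<in> R" | "y = c" "z = d" | "y = d" "z = c" by blast
  then show ?case
  proof cases
    case 1
    then have yz: "(y,z) \<in> R\<^sup>*" by simp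
    show ?thesis using step.IH
    proof (elim disjE conjE)
      assume "(a,y) \<in> R\<^sup>*" then show ?thesis using yz by (meson rtrancl_trans)
    next
      assume "(a,c) \<in> R\<^sup>*" "(d,y) \<in> R\<^sup>*" then show ?thesis using yz by (meson rtrancl_trans)
    next
      assume "(a,d) \<in> R\<^sup>*" "(c,y) \<in> R\<^sup>*" then show ?thesis using yz by (meson rtrancl_trans)
    qed
  next
    case 2
    show ?thesis using step.IH
    proof (elim disjE conjE)
      assume "(a,y) \<in> R\<^sup>*" then show ?thesis using 2 by simp
    next
      assume "(a,c) \<in> R\<^sup>*" "(d,y) \<in> R\<^sup>*" then show ?thesis using 2 by simp
    next
      assume "(a,d) \<in> R\<^sup>*" "(c,y) \<in> R\<^sup>*" then show ?thesis using 2 s by (meson rtrancl_trans)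
    qed
  next
    case 3
    show ?thesis using step.IH
    proof (elim disjE conjE)
      assume "(a,y) \<in> R\<^sup>*" then show ?thesis using 3 by simp
    next
      assume "(a,c) \<in> R\<^sup>*" "(d,y) \<in> R\<^sup>*" then show ?thesis using 3 s by (meson rtrancl_trans)
    next
      assume "(a,d) \<in> R\<^sup>*" "(c,y) \<in> R\<^sup>*" then show ?thesis using 3 by simp
    qed
  qed
qed

lemma adj_insert: "adj_in (insert {c,d} H) S \<subseteq> adj_in H S \<union> {(c,d),(d,c)}"
  unfolding adj_in_def by (auto simp: doubleton_eq_iff)

lemma add_edge:
  assumes "(a,b) \<in> (adj_in (insert {c,d} H) S)\<^sup>*"
  shows "(a,b) \<in> (adj_in H S)\<^sup>* \<or> ((a,c) \<in> (adj_in H S)\<^sup>* \<and> (d,b) \<in> (adj_in H S)\<^sup>*) \<or> ((a,d) \<in> (adj_in H S)\<^sup>* \<and> (c,b) \<in> (adj_in H S)\<^sup>*)"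
proof -
  have "(a,b) \<in> (adj_in H S \<union> {(c,d),(d,c)})\<^sup>*"
    using rtrancl_mono[OF adj_insert] assms by (rule subsetD)
  then show ?thesis using add_edge_gen[OF sym_adj] by metis
qed

lemma segment:
  assumes "\<forall>k. m \<le> k \<and> k < n \<longrightarrow> (p!k, p!Suc k) \<in> R" "m \<le> n"
  shows "(p!m, p!n) \<in> R\<^sup>*"
  using assms
proof (induction n)
  case 0 then show ?case by simp
next
  case (Suc n)
  show ?case
  proof (cases "m = Suc n")
    case True then show ?thesis by simp
  next
    case False
    then have "(p!m, p!n) \<in> R\<^sup>*" using Suc by auto
    moreover have "(p!n, p!Suc n) \<in> R" using Suc False by auto
    ultimately show ?thesis by simp
  qed
qed

lemma edge_neq:
  assumes "distinct p" "Suc m < length p" "Suc i < length p" "m \<noteq> i"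
  shows "{p!m, p!Suc m} \<noteq> {p!i, p!Suc i}"
proof
  assume h: "{p!m, p!Suc m} = {p!i, p!Suc i}"
  then have "p!m = p!i \<or> p!m = p!Suc i" by auto
  then have "m = Suc i" using assms nth_eq_iff_index_eq by fastforce
  moreover have "p!Suc m = p!i \<or> p!Suc m = p!Suc i" using h by auto
  ultimately show False using assms nth_eq_iff_index_eq by fastforce
qed

lemma ivt_nat:
  assumes "P 0" "\<not> P k"
  shows "\<exists>i<k. P i \<and> \<not> P (Suc i)"
  using assms
proof (induction k)
  case 0 then show ?case by simp
next
  case (Suc k)
  then show ?case by (metis less_Suc_eq)
qed

lemma walk_path:
  assumes "(a,b) \<in> (adj_in G S)\<^sup>*" "a \<in> S"
  shows "\<exists>p. is_path G p a b \<and> set p \<subseteq> S \<and> (\<forall>z\<in>set p. (a,z) \<in> (adj_in G S)\<^sup>*)"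
  using assms(1)
proof (induction rule: rtrancl_induct)
  case base
  then show ?case using assms(2) by (auto simp: is_path_succ)
next
  case (step y z)
  then obtain p where p: "is_path G p a y" "set p \<subseteq> S" "\<forall>z\<in>set p. (a,z) \<in> (adj_in G S)\<^sup>*" by blast
  have yz: "{y,z} \<in> G" "z \<in> S" using step.hyps(2) unfolding adj_in_def by auto
  show ?case
  proof (cases "z \<in> set p")
    case True
    then obtain xs ys where xs: "p = xs @ z # ys" by (meson split_list)
    have "is_path G (xs @ [z]) a z" using p(1) unfolding is_path_succ xs
      by (auto simp: successively_append_iff successively_Cons hd_append split: if_splits)
    then show ?thesis using p xs by (intro exI[of _ "xs@[z]"]) auto
  next
    case False
    have pp: "p \<noteq> []" "hd p = a" "last p = y" "distinct p" "successively (\<lambda>a b. {a,b} \<in> G) p"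
      using p(1) unfolding is_path_succ by auto
    have "successively (\<lambda>a b. {a,b} \<in> G) (p @ [z])"
      unfolding successively_append_iff using pp yz by simp
    moreover have "hd (p @ [z]) = a" using pp by simp
    moreover have "distinct (p @ [z])" using pp False by simp
    ultimately have "is_path G (p @ [z]) a z" unfolding is_path_succ by simp
    moreover have az: "(a,z) \<in> (adj_in G S)\<^sup>*" using step.hyps by (rule rtrancl.rtrancl_into_rtrancl)
    ultimately show ?thesis using p yz by (intro exI[of _ "p@[z]"]) simp
  qed
qed

lemma path_conn:
  assumes "is_path G p a b" "set p \<subseteq> S"
  shows "(a,b) \<in> (adj_in G S)\<^sup>*"
proof -
  have ne: "p \<noteq> []" and h: "hd p = a" and l: "last p = b" and sc: "\<forall>i. Suc i < length p \<longrightarrow> {p!i, p!Suc i} \<in> G"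
    using assms(1) unfolding is_path_def by auto
  have "(p!0, p!(length p - 1)) \<in> (adj_in G S)\<^sup>*"
  proof (rule segment)
    show "\<forall>k. 0 \<le> k \<and> k < length p - 1 \<longrightarrow> (p ! k, p ! Suc k) \<in> adj_in G S"
    proof (intro allI impI)
      fix k assume k: "0 \<le> k \<and> k < length p - 1"
      have kk: "Suc k < length p" using k by linarith
      then have "{p!k, p!Suc k} \<in> G" using sc by blast
      moreover have "p!k \<in> S" "p!Suc k \<in> S" using kk assms(2) nth_mem[of k p] nth_mem[of "Suc k" p] by auto
      ultimately show "(p ! k, p ! Suc k) \<in> adj_in G S" unfolding adj_in_def by simp
    qed
  qed simp
  then show ?thesis using h l hd_conv_nth[OF ne] last_conv_nth[OF ne] by metis
qed

lemma sg_V: "simple_graph V T \<Longrightarrow> {a,b} \<in> T \<Longrightarrow> a \<in> V \<and> b \<in> V"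
  unfolding simple_graph_def by (smt (verit) doubleton_eq_iff)

lemma path_V:
  assumes "simple_graph V T" "is_path T p a b" "j < length p" "length p \<ge> 2"
  shows "p!j \<in> V"
proof -
  have sc: "\<forall>i. Suc i < length p \<longrightarrow> {p!i, p!Suc i} \<in> T" using assms(2) unfolding is_path_def by simp
  show ?thesis
  proof (cases "Suc j < length p")
    case True
    then have "{p!j, p!Suc j} \<in> T" using sc by blast
    then show ?thesis using sg_V[OF assms(1)] by blast
  next
    case False
    then obtain j' where j': "j = Suc j'" using assms(3,4) by (cases j) auto
    then have "Suc j' < length p" using assms(3) by simp
    then have "{p!j', p!j} \<in> T" using sc j' by blast
    then show ?thesis using sg_V[OF assms(1)] by blast
  qed
qed

lemma path_in_conn:
  assumes "is_tree V T" "S \<subseteq> V" "connected_in T S" "is_path T p a b" "a \<in> S" "b \<in> S"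
  shows "set p \<subseteq> S"
proof
  fix z assume z: "z \<in> set p"
  show "z \<in> S"
  proof (rule ccontr)
    assume zS: "z \<notin> S"
    obtain k where k: "k < length p" "p!k = z" using z by (meson in_set_conv_nth)
    have ne: "p \<noteq> []" and h: "hd p = a" and l: "last p = b" and dp: "distinct p"
      and sc: "\<forall>i. Suc i < length p \<longrightarrow> {p!i, p!Suc i} \<in> T"
      using assms(4) unfolding is_path_def by auto
    have p0: "p!0 = a" using h hd_conv_nth[OF ne] by metis
    define n where "n = length p - 1"
    have pn: "p!n = b" using l last_conv_nth[OF ne] n_def by metis
    have "k \<le> n" using k n_def by auto
    obtain i where i: "i < k" "p!i \<in> S" "p!Suc i \<notin> S"
      using ivt_nat[of "\<lambda>i. p!i \<in> S" k] p0 k zS assms(5) by auto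
    have sin: "Suc i < n" using i \<open>k \<le> n\<close> pn assms(6) by (metis le_neq_implies_less less_le_trans Suc_leI)
    have len2: "length p \<ge> 2" using sin n_def by auto
    define c d where "c = p!i" and "d = p!Suc i"
    have cd: "{c,d} \<in> T" using sc sin n_def c_def d_def by auto
    have sgT: "simple_graph V T" using assms(1) unfolding is_tree_def by auto
    let ?H = "T - {{c,d}}"
    have "(p!Suc i, p!n) \<in> (adj_in ?H V)\<^sup>*"
    proof (rule segment)
      show "\<forall>m. Suc i \<le> m \<and> m < n \<longrightarrow> (p ! m, p ! Suc m) \<in> adj_in ?H V"
      proof (intro allI impI)
        fix m assume m: "Suc i \<le> m \<and> m < n"
        have "Suc m < length p" "Suc i < length p" "m \<noteq> i" using m n_def sin by auto
        then have "{p!m, p!Suc m} \<noteq> {c,d}" unfolding c_def d_def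
          using edge_neq[OF dp, of m i] by blast
        moreover have "{p!m, p!Suc m} \<in> T" using sc m n_def by auto
        moreover have "p!m \<in> V" "p!Suc m \<in> V" using path_V[OF sgT assms(4)] m n_def len2 by auto
        ultimately show "(p ! m, p ! Suc m) \<in> adj_in ?H V" unfolding adj_in_def by auto
      qed
    qed (use sin in auto)
    then have db: "(d, b) \<in> (adj_in ?H V)\<^sup>*" using pn d_def by simp
    have "(b, c) \<in> (adj_in T S)\<^sup>*" using assms(3) assms(6) i(2) c_def unfolding connected_in_def by auto
    moreover have "adj_in T S \<subseteq> adj_in ?H V"
      using assms(2) i(3) d_def unfolding adj_in_def by (auto simp: doubleton_eq_iff)
    ultimately have "(b, c) \<in> (adj_in ?H V)\<^sup>*" using rtrancl_mono by (metis subsetD)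
    with db have "(d,c) \<in> (adj_in ?H V)\<^sup>*" by simp
    then have "(c,d) \<in> (adj_in ?H V)\<^sup>*" by (rule rt_sym)
    moreover have "acyclic_graph V T" using assms(1) unfolding is_tree_def by auto
    ultimately show False using cd unfolding acyclic_graph_def by blast
  qed
qed

lemma union_conn:
  assumes "\<forall>X\<in>F. connected_in T X" "inter_connected F"
  shows "connected_in T (\<Union>F)"
  unfolding connected_in_def
proof (intro ballI)
  fix p q assume "p \<in> \<Union>F" "q \<in> \<Union>F"
  then obtain X Y where X: "X \<in> F" "p \<in> X" and Y: "Y \<in> F" "q \<in> Y" by blast
  let ?Rel = "{(X,Y). X \<in> F \<and> Y \<in> F \<and> X \<inter> Y \<noteq> {}}"
  have "(X,Y) \<in> ?Rel\<^sup>*" using assms(2) X(1) Y(1) unfolding inter_connected_def by blast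
  then have "\<forall>r\<in>Y. (p,r) \<in> (adj_in T (\<Union>F))\<^sup>*"
  proof (induction rule: rtrancl_induct)
    case base
    show ?case
    proof
      fix r assume "r \<in> X"
      then have "(p,r) \<in> (adj_in T X)\<^sup>*" using assms(1) X unfolding connected_in_def by blast
      then show "(p,r) \<in> (adj_in T (\<Union>F))\<^sup>*" using rt_mono[of T T X "\<Union>F"] X(1) by blast
    qed
  next
    case (step Y1 Y2)
    then have Y2: "Y2 \<in> F" "Y1 \<inter> Y2 \<noteq> {}" by auto
    then obtain c where c: "c \<in> Y1" "c \<in> Y2" by blast
    have pc: "(p,c) \<in> (adj_in T (\<Union>F))\<^sup>*" using step.IH c(1) by blast
    show ?case
    proof
      fix r assume "r \<in> Y2"
      then have "(c,r) \<in> (adj_in T Y2)\<^sup>*" using assms(1) Y2 c unfolding connected_in_def by blast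
      then have "(c,r) \<in> (adj_in T (\<Union>F))\<^sup>*" using rt_mono[of T T Y2 "\<Union>F"] Y2(1) by blast
      then show "(p,r) \<in> (adj_in T (\<Union>F))\<^sup>*" using rtrancl_trans[OF pc] by blast
    qed
  qed
  then show "(p,q) \<in> (adj_in T (\<Union>F))\<^sup>*" using Y(2) by blast
qed

lemma comp_gen_conn:
  assumes "S \<in> comp_gen E" "host_tree V E T" "hypergraph V E"
  shows "S \<subseteq> V \<and> S \<noteq> {} \<and> connected_in T S"
  using assms(1)
proof (induction rule: comp_gen.induct)
  case (base e)
  then show ?case using assms(2,3) unfolding host_tree_def hypergraph_def by blast
next
  case (inter A B)
  have tr: "is_tree V T" using assms(2) unfolding host_tree_def by blast
  have "connected_in T (A \<inter> B)"
    unfolding connected_in_def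
  proof (intro ballI)
    fix p q assume pq: "p \<in> A \<inter> B" "q \<in> A \<inter> B"
    have cA: "connected_in T A" and cB: "connected_in T B" and BV: "B \<subseteq> V" using inter.IH by simp_all
    have "(p,q) \<in> (adj_in T A)\<^sup>*" using cA pq unfolding connected_in_def by simp
    then obtain P where P: "is_path T P p q" "set P \<subseteq> A" using walk_path[of p q T A] pq by auto
    have "set P \<subseteq> B" using path_in_conn[OF tr BV cB P(1)] pq by simp
    then have "set P \<subseteq> A \<inter> B" using P by simp
    then show "(p,q) \<in> (adj_in T (A \<inter> B))\<^sup>*" using path_conn[OF P(1)] by simp
  qed
  then show ?case using inter.IH inter.hyps(3) by blast
next
  case (union F)
  have hF: "\<forall>X\<in>F. X \<subseteq> V \<and> X \<noteq> {} \<and> connected_in T X" using union.IH(1) by auto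
  have c: "connected_in T (\<Union>F)" using union_conn[of F T] hF union.hyps(3) by simp
  have "\<Union>F \<subseteq> V" using hF by auto
  moreover have "\<Union>F \<noteq> {}" using hF union.hyps(2) by auto
  ultimately show ?case using c by simp
qed


lemma path_rev: "is_path G p a b \<Longrightarrow> is_path G (rev p) b a"
  unfolding is_path_succ by (auto simp: hd_rev last_rev insert_commute)

lemma path_verts_sym: "w \<in> path_verts G b a \<Longrightarrow> w \<in> path_verts G a b"
  unfolding path_verts_def using path_rev by fastforce

lemma exchange:
  assumes ht: "host_tree V E T0"
    and HH: "H = T0 - {{x,y}}"
    and xyT: "{x,y} \<in> T0" and xB: "x \<in> B" and yB: "y \<in> B" and BV: "B \<subseteq> V"
    and nG: "(x,y) \<notin> adj_in (two_section (edges_not_containing E B)) V"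
    and ux: "(u,x) \<in> (adj_in H V)\<^sup>*" and yv: "(y,v) \<in> (adj_in H V)\<^sup>*"
    and wx: "(w,x) \<in> (adj_in H V)\<^sup>*" and nxy: "(x,y) \<notin> (adj_in H V)\<^sup>*"
    and wB: "w \<in> B" and uV: "u \<in> V" and hg: "hypergraph V E"
  shows "\<exists>T. host_tree V E T \<and> w \<in> path_verts T u v"
proof -
  let ?R = "adj_in H V"
  have tr0: "is_tree V T0" using ht unfolding host_tree_def by simp
  have sg0: "simple_graph V T0" and con0: "connected_in T0 V" and ac0: "acyclic_graph V T0"
    using tr0 unfolding is_tree_def by simp_all
  have wV: "w \<in> V" and xV: "x \<in> V" and yV: "y \<in> V" using wB xB yB BV by auto
  have xw: "(x,w) \<in> ?R\<^sup>*" using wx by (rule rt_sym)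
  have wy_ne: "w \<noteq> y"
  proof
    assume "w = y"
    then have "(x,y) \<in> ?R\<^sup>*" using xw by simp
    then show False using nxy by simp
  qed
  have wyH: "{w,y} \<notin> H"
  proof
    assume "{w,y} \<in> H"
    then have "(w,y) \<in> ?R" using wV yV unfolding adj_in_def by simp
    then have "(x,y) \<in> ?R\<^sup>*" by (rule rtrancl.rtrancl_into_rtrancl[OF xw])
    then show False using nxy by simp
  qed
  have T0H: "T0 = insert {x,y} H" using HH xyT by blast
  have HT0: "H \<subseteq> T0" using HH by blast
  define T where "T = insert {w,y} H"
  have HT: "H \<subseteq> T" unfolding T_def by blast
  have sgT: "simple_graph V T"
    unfolding simple_graph_def
  proof
    fix e assume "e \<in> T"
    then consider "e = {w,y}" | "e \<in> T0" using HT0 unfolding T_def by blast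
    then show "\<exists>a b. a \<noteq> b \<and> e = {a, b} \<and> a \<in> V \<and> b \<in> V"
    proof cases
      case 1 then show ?thesis using wy_ne wV yV by blast
    next
      case 2 then show ?thesis using sg0 unfolding simple_graph_def by blast
    qed
  qed
  have RT: "\<And>a b. (a,b) \<in> ?R\<^sup>* \<Longrightarrow> (a,b) \<in> (adj_in T V)\<^sup>*"
    using rt_mono[OF HT] by blast
  have ywT: "(y,w) \<in> adj_in T V" using wV yV unfolding adj_in_def T_def by (simp add: insert_commute)
  have yxT: "(y,x) \<in> (adj_in T V)\<^sup>*"
    using converse_rtrancl_into_rtrancl[OF ywT RT[OF wx]] .
  have allx: "(a,x) \<in> (adj_in T V)\<^sup>*" if aV: "a \<in> V" for a
  proof -
    have "(a,x) \<in> (adj_in T0 V)\<^sup>*" using con0 aV xV unfolding connected_in_def by simp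
    then have "(a,x) \<in> (adj_in (insert {x,y} H) V)\<^sup>*" using T0H by simp
    then have "(a,x) \<in> ?R\<^sup>* \<or> (a,y) \<in> ?R\<^sup>*" using add_edge by metis
    then show ?thesis
    proof
      assume "(a,x) \<in> ?R\<^sup>*" then show ?thesis by (rule RT)
    next
      assume "(a,y) \<in> ?R\<^sup>*"
      then have "(a,y) \<in> (adj_in T V)\<^sup>*" by (rule RT)
      then show ?thesis using yxT by (rule rtrancl_trans)
    qed
  qed
  have conT: "connected_in T V"
    unfolding connected_in_def
  proof (intro ballI)
    fix a b assume "a \<in> V" "b \<in> V"
    then have "(a,x) \<in> (adj_in T V)\<^sup>*" "(b,x) \<in> (adj_in T V)\<^sup>*" using allx by simp_all
    then show "(a,b) \<in> (adj_in T V)\<^sup>*" using rtrancl_trans rt_sym by metis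
  qed
  have acT: "acyclic_graph V T"
    unfolding acyclic_graph_def
  proof (intro allI impI)
    fix a b assume abT: "{a,b} \<in> T"
    show "(a, b) \<notin> (adj_in (T - {{a, b}}) V)\<^sup>*"
    proof (cases "{a,b} = {w,y}")
      case True
      then have "T - {{a,b}} = H" using wyH unfolding T_def by simp
      show ?thesis
      proof
        assume "(a, b) \<in> (adj_in (T - {{a, b}}) V)\<^sup>*"
        then have ab: "(a,b) \<in> ?R\<^sup>*" using \<open>T - {{a,b}} = H\<close> by simp
        have "(w,y) \<in> ?R\<^sup>*"
        proof (cases "a = w")
          case True then show ?thesis using ab \<open>{a,b} = {w,y}\<close> wy_ne by (auto simp add: doubleton_eq_iff)
        next
          case False
          then have "a = y" "b = w" using \<open>{a,b} = {w,y}\<close> by (auto simp: doubleton_eq_iff)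
          then show ?thesis using ab rt_sym by metis
        qed
        then have "(x,y) \<in> ?R\<^sup>*" by (rule rtrancl_trans[OF xw])
        then show False using nxy by simp
      qed
    next
      case False
      then have abH: "{a,b} \<in> H" using abT unfolding T_def by blast
      then have abV: "a \<in> V" "b \<in> V" using sg_V[OF sg0] HT0 by blast+
      have abR: "(a,b) \<in> ?R" using abH abV unfolding adj_in_def by simp
      let ?H' = "H - {{a,b}}"
      have eq: "T - {{a,b}} = insert {w,y} ?H'" using False unfolding T_def by blast
      show ?thesis
      proof
        assume "(a, b) \<in> (adj_in (T - {{a, b}}) V)\<^sup>*"
        then have "(a, b) \<in> (adj_in (insert {w,y} ?H') V)\<^sup>*" using eq by simp
        then have cases3: "(a,b) \<in> (adj_in ?H' V)\<^sup>* \<or> ((a,w) \<in> (adj_in ?H' V)\<^sup>* \<and> (y,b) \<in> (adj_in ?H' V)\<^sup>*)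
            \<or> ((a,y) \<in> (adj_in ?H' V)\<^sup>* \<and> (w,b) \<in> (adj_in ?H' V)\<^sup>*)" by (rule add_edge)
        have H'R: "\<And>c d. (c,d) \<in> (adj_in ?H' V)\<^sup>* \<Longrightarrow> (c,d) \<in> ?R\<^sup>*"
          using rt_mono[of ?H' H V V] by blast
        show False using cases3
        proof (elim disjE conjE)
          assume "(a,b) \<in> (adj_in ?H' V)\<^sup>*"
          then have "(a,b) \<in> (adj_in (T0 - {{a,b}}) V)\<^sup>*" using rt_mono[of ?H' "T0 - {{a,b}}" V V] HT0 by blast
          then show False using ac0 abH HT0 unfolding acyclic_graph_def by blast
        next
          assume h1: "(a,w) \<in> (adj_in ?H' V)\<^sup>*" and h2: "(y,b) \<in> (adj_in ?H' V)\<^sup>*"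
          have "(w,a) \<in> ?R\<^sup>*" using H'R[OF h1] by (rule rt_sym)
          then have "(w,b) \<in> ?R\<^sup>*" using abR by (rule rtrancl.rtrancl_into_rtrancl)
          moreover have "(b,y) \<in> ?R\<^sup>*" using H'R[OF h2] by (rule rt_sym)
          ultimately have "(w,y) \<in> ?R\<^sup>*" by (rule rtrancl_trans)
          then have "(x,y) \<in> ?R\<^sup>*" by (rule rtrancl_trans[OF xw])
          then show False using nxy by simp
        next
          assume h1: "(a,y) \<in> (adj_in ?H' V)\<^sup>*" and h2: "(w,b) \<in> (adj_in ?H' V)\<^sup>*"
          have "(y,a) \<in> ?R\<^sup>*" using H'R[OF h1] by (rule rt_sym)
          then have "(y,b) \<in> ?R\<^sup>*" using abR by (rule rtrancl.rtrancl_into_rtrancl)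
          moreover have "(b,w) \<in> ?R\<^sup>*" using H'R[OF h2] by (rule rt_sym)
          ultimately have "(y,w) \<in> ?R\<^sup>*" by (rule rtrancl_trans)
          then have "(y,x) \<in> ?R\<^sup>*" using wx by (rule rtrancl_trans)
          then show False using nxy rt_sym by metis
        qed
      qed
    qed
  qed
  have treeT: "is_tree V T" using sgT conT acT unfolding is_tree_def by simp
  have hostT: "\<forall>e\<in>E. connected_in T e"
  proof
    fix e assume eE: "e \<in> E"
    have ce: "connected_in T0 e" using ht eE unfolding host_tree_def by simp
    have eV: "e \<subseteq> V" using hg eE unfolding hypergraph_def by blast
    have sub: "adj_in T0 e \<subseteq> (adj_in T e)\<^sup>*"
    proof (cases "B \<subseteq> e")
      case True
      have we: "w \<in> e" "x \<in> e" "y \<in> e" using True wB xB yB by auto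
      have "(w,x) \<in> (adj_in T0 e)\<^sup>*" using ce we unfolding connected_in_def by simp
      then have "(w,x) \<in> (adj_in (insert {x,y} H) e)\<^sup>*" using T0H by simp
      then have c3: "(w,x) \<in> (adj_in H e)\<^sup>* \<or> (w,y) \<in> (adj_in H e)\<^sup>*" using add_edge by metis
      have wxe: "(w,x) \<in> (adj_in H e)\<^sup>*"
      proof (rule ccontr)
        assume "(w,x) \<notin> (adj_in H e)\<^sup>*"
        then have "(w,y) \<in> (adj_in H e)\<^sup>*" using c3 by simp
        then have "(w,y) \<in> ?R\<^sup>*" using rt_mono[of H H e V] eV by blast
        then have "(x,y) \<in> ?R\<^sup>*" by (rule rtrancl_trans[OF xw])
        then show False using nxy by simp
      qed
      have "(w,x) \<in> (adj_in T e)\<^sup>*" using rt_mono[of H T e e] HT wxe by blast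
      then have xwT: "(x,w) \<in> (adj_in T e)\<^sup>*" by (rule rt_sym)
      have wyT: "(w,y) \<in> adj_in T e" using we unfolding adj_in_def T_def by simp
      have xyT': "(x,y) \<in> (adj_in T e)\<^sup>*" using rtrancl.rtrancl_into_rtrancl[OF xwT wyT] .
      have yxT': "(y,x) \<in> (adj_in T e)\<^sup>*" using xyT' by (rule rt_sym)
      show ?thesis
      proof
        fix pq assume "pq \<in> adj_in T0 e"
        then obtain p q where pq: "pq = (p,q)" "{p,q} \<in> T0" "p \<in> e" "q \<in> e" unfolding adj_in_def by blast
        show "pq \<in> (adj_in T e)\<^sup>*"
        proof (cases "{p,q} = {x,y}")
          case True
          then have "(p = x \<and> q = y) \<or> (p = y \<and> q = x)" by (auto simp: doubleton_eq_iff)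
          then show ?thesis using pq(1) xyT' yxT' by auto
        next
          case False
          then have "{p,q} \<in> T" using pq(2) HH HT by blast
          then have "(p,q) \<in> adj_in T e" using pq unfolding adj_in_def by simp
          then show ?thesis using pq(1) by simp
        qed
      qed
    next
      case False
      have nxye: "\<not> (x \<in> e \<and> y \<in> e)"
      proof
        assume xye: "x \<in> e \<and> y \<in> e"
        have "x \<noteq> y" using nxy by auto
        moreover have "e \<in> edges_not_containing E B" using eE False unfolding edges_not_containing_def by simp
        ultimately have "{x,y} \<in> two_section (edges_not_containing E B)"
          using xye unfolding two_section_def by blast
        then have "(x,y) \<in> adj_in (two_section (edges_not_containing E B)) V" using xV yV unfolding adj_in_def by simp
        then show False using nG by simp
      qed
      show ?thesis
      proof
        fix pq assume "pq \<in> adj_in T0 e"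
        then obtain p q where pq: "pq = (p,q)" "{p,q} \<in> T0" "p \<in> e" "q \<in> e" unfolding adj_in_def by blast
        have "{p,q} \<noteq> {x,y}" using nxye pq(3,4) by (auto simp: doubleton_eq_iff)
        then have "{p,q} \<in> T" using pq(2) HH HT by blast
        then have "(p,q) \<in> adj_in T e" using pq unfolding adj_in_def by simp
        then show "pq \<in> (adj_in T e)\<^sup>*" using pq(1) by simp
      qed
    qed
    show "connected_in T e"
      unfolding connected_in_def
    proof (intro ballI)
      fix p q assume "p \<in> e" "q \<in> e"
      then have "(p,q) \<in> (adj_in T0 e)\<^sup>*" using ce unfolding connected_in_def by simp
      then show "(p,q) \<in> (adj_in T e)\<^sup>*" using rtrancl_subset_rtrancl[OF sub] by (rule subsetD[rotated])
    qed
  qed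
  have hostT': "host_tree V E T" using treeT hostT unfolding host_tree_def by simp
  have uw: "(u,w) \<in> ?R\<^sup>*" by (rule rtrancl_trans[OF ux xw])
  obtain p1 where p1: "is_path H p1 u w" "set p1 \<subseteq> V" "\<forall>z\<in>set p1. (u,z) \<in> ?R\<^sup>*"
    using walk_path[OF uw uV] by blast
  obtain p2 where p2: "is_path H p2 y v" "set p2 \<subseteq> V" "\<forall>z\<in>set p2. (y,z) \<in> ?R\<^sup>*"
    using walk_path[OF yv yV] by blast
  have disj: "set p1 \<inter> set p2 = {}"
  proof (rule ccontr)
    assume "set p1 \<inter> set p2 \<noteq> {}"
    then obtain z where z: "z \<in> set p1" "z \<in> set p2" by blast
    have "(u,z) \<in> ?R\<^sup>*" using p1(3) z(1) by simp
    then have xz: "(x,z) \<in> ?R\<^sup>*" using rtrancl_trans[OF rt_sym[OF ux]] by simp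
    have "(y,z) \<in> ?R\<^sup>*" using p2(3) z(2) by simp
    then have "(z,y) \<in> ?R\<^sup>*" by (rule rt_sym)
    then have "(x,y) \<in> ?R\<^sup>*" by (rule rtrancl_trans[OF xz])
    then show False using nxy by simp
  qed
  have a1: "p1 \<noteq> []" "hd p1 = u" "last p1 = w" "distinct p1" "successively (\<lambda>a b. {a,b} \<in> H) p1"
    using p1(1) unfolding is_path_succ by simp_all
  have a2: "p2 \<noteq> []" "hd p2 = y" "last p2 = v" "distinct p2" "successively (\<lambda>a b. {a,b} \<in> H) p2"
    using p2(1) unfolding is_path_succ by simp_all
  have s1: "successively (\<lambda>a b. {a,b} \<in> T) p1"
    by (rule successively_mono[OF a1(5)]) (use HT in auto)
  have s2: "successively (\<lambda>a b. {a,b} \<in> T) p2"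
    by (rule successively_mono[OF a2(5)]) (use HT in auto)
  have "{w,y} \<in> T" unfolding T_def by simp
  then have "successively (\<lambda>a b. {a,b} \<in> T) (p1 @ p2)"
    unfolding successively_append_iff using s1 s2 a1 a2 by simp
  moreover have "distinct (p1 @ p2)" using a1 a2 disj by simp
  ultimately have "is_path T (p1 @ p2) u v" unfolding is_path_succ using a1 a2 by simp
  moreover have "w \<in> set (p1 @ p2)" using a1(3) last_in_set[OF a1(1)] by simp
  ultimately have "w \<in> path_verts T u v" unfolding path_verts_def by blast
  then show ?thesis using hostT' by blast
qed


lemma comp_conn:
  assumes "S \<in> Comp V E" "host_tree V E T" "hypergraph V E"
  shows "S \<subseteq> V \<and> connected_in T S"
proof -
  from assms(1) consider "S = V" | x where "S = {x}" "x \<in> V" | "S \<in> comp_gen E"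
    unfolding Comp_def by blast
  then show ?thesis
  proof cases
    case 1 then show ?thesis using assms(2) unfolding host_tree_def is_tree_def by simp
  next
    case 2 then show ?thesis unfolding connected_in_def by simp
  next
    case 3 then show ?thesis using comp_gen_conn assms(2,3) by blast
  qed
qed

theorem mainTheorem17:
  fixes V :: "'a set" and E :: "'a set set" and B :: "'a set" and u v :: 'a
  assumes "hypertree V E"
    and "basic_set V E B"
    and "u \<in> B" and "v \<in> B"
    and "(u, v) \<notin> (adj_in (two_section (edges_not_containing E B)) V)\<^sup>*"
  shows "B = \<Union> {path_verts T u v | T. host_tree V E T}"
proof -
  have hg: "hypergraph V E" using assms(1) unfolding hypertree_def by simp
  obtain T0 where ht0: "host_tree V E T0" using assms(1) unfolding hypertree_def by blast
  have BC: "B \<in> Comp V E" using assms(2) unfolding basic_set_def by simp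
  have BV: "B \<subseteq> V" using comp_conn[OF BC ht0 hg] by simp
  let ?RG = "adj_in (two_section (edges_not_containing E B)) V"
  have sup: "path_verts T u v \<subseteq> B" if hT: "host_tree V E T" for T
  proof
    fix z assume "z \<in> path_verts T u v"
    then obtain p where p: "is_path T p u v" "z \<in> set p" unfolding path_verts_def by blast
    have tr: "is_tree V T" using hT unfolding host_tree_def by simp
    have cB: "connected_in T B" using comp_conn[OF BC hT hg] by simp
    have "set p \<subseteq> B" using path_in_conn[OF tr BV cB p(1) assms(3,4)] .
    then show "z \<in> B" using p(2) by blast
  qed
  have sub: "\<exists>T. host_tree V E T \<and> w \<in> path_verts T u v" if wB: "w \<in> B" for w
  proof -
    have tr0: "is_tree V T0" using ht0 unfolding host_tree_def by simp
    have sg0: "simple_graph V T0" and con0: "connected_in T0 V" and ac0: "acyclic_graph V T0"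
      using tr0 unfolding is_tree_def by simp_all
    have cB: "connected_in T0 B" using comp_conn[OF BC ht0 hg] by simp
    have "(u,v) \<in> (adj_in T0 B)\<^sup>*" using cB assms(3,4) unfolding connected_in_def by simp
    then obtain p where p: "is_path T0 p u v" "set p \<subseteq> B" using walk_path[of u v T0 B] assms(3) by auto
    have ne: "p \<noteq> []" and h: "hd p = u" and l: "last p = v" and dp: "distinct p"
      and sc: "\<forall>i. Suc i < length p \<longrightarrow> {p!i, p!Suc i} \<in> T0"
      using p(1) unfolding is_path_def by auto
    have p0: "p!0 = u" using h hd_conv_nth[OF ne] by metis
    define n where "n = length p - 1"
    have pn: "p!n = v" using l last_conv_nth[OF ne] n_def by metis
    have inB: "\<And>k. k < length p \<Longrightarrow> p!k \<in> B" using p(2) nth_mem by blast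
    obtain i where i: "i < n" "(u, p!i) \<in> ?RG\<^sup>*" "(u, p!Suc i) \<notin> ?RG\<^sup>*"
      using ivt_nat[of "\<lambda>i. (u, p!i) \<in> ?RG\<^sup>*" n] p0 pn assms(5) by auto
    define x y where "x = p!i" and "y = p!Suc i"
    have si: "Suc i < length p" using i(1) n_def by simp
    have xyT: "{x,y} \<in> T0" using sc si x_def y_def by simp
    have xB: "x \<in> B" and yB: "y \<in> B" using inB si x_def y_def by simp_all
    have nG: "(x,y) \<notin> ?RG"
    proof
      assume "(x,y) \<in> ?RG"
      then have "(u,y) \<in> ?RG\<^sup>*" using rtrancl.rtrancl_into_rtrancl[OF i(2)] x_def by simp
      then show False using i(3) y_def by simp
    qed
    define H where "H = T0 - {{x,y}}"
    let ?R = "adj_in H V"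
    have segR: "(p!m, p!Suc m) \<in> ?R" if "Suc m < length p" "m \<noteq> i" for m
    proof -
      have "{p!m, p!Suc m} \<noteq> {x,y}" unfolding x_def y_def using edge_neq[OF dp that(1) si that(2)] .
      moreover have "{p!m, p!Suc m} \<in> T0" using sc that(1) by simp
      moreover have "p!m \<in> V" "p!Suc m \<in> V" using inB that(1) BV by auto
      ultimately show ?thesis unfolding adj_in_def H_def by simp
    qed
    have ux: "(u,x) \<in> ?R\<^sup>*"
    proof -
      have "(p!0, p!i) \<in> ?R\<^sup>*"
        by (rule segment) (use segR si in auto)
      then show ?thesis using p0 x_def by simp
    qed
    have yv: "(y,v) \<in> ?R\<^sup>*"
    proof -
      have "(p!Suc i, p!n) \<in> ?R\<^sup>*"
        by (rule segment) (use segR n_def i(1) in auto)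
      then show ?thesis using pn y_def by simp
    qed
    have nxy: "(x,y) \<notin> ?R\<^sup>*" using ac0 xyT unfolding acyclic_graph_def H_def by blast
    have wV: "w \<in> V" and xV: "x \<in> V" and uV: "u \<in> V" and vV: "v \<in> V" using wB xB BV assms(3,4) by auto
    have "(w,x) \<in> (adj_in T0 V)\<^sup>*" using con0 wV xV unfolding connected_in_def by simp
    moreover have "T0 = insert {x,y} H" using xyT unfolding H_def by blast
    ultimately have "(w,x) \<in> (adj_in (insert {x,y} H) V)\<^sup>*" by simp
    then have "(w,x) \<in> ?R\<^sup>* \<or> (w,y) \<in> ?R\<^sup>*" using add_edge by metis
    then show ?thesis
    proof
      assume wx: "(w,x) \<in> ?R\<^sup>*"
      show ?thesis using exchange[OF ht0 H_def xyT xB yB BV nG ux yv wx nxy wB uV hg] .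
    next
      assume wy: "(w,y) \<in> ?R\<^sup>*"
      have H2: "H = T0 - {{y,x}}" unfolding H_def by (simp add: insert_commute)
      have yxT: "{y,x} \<in> T0" using xyT by (simp add: insert_commute)
      have nG2: "(y,x) \<notin> ?RG" using nG unfolding adj_in_def by (auto simp add: insert_commute)
      have nyx: "(y,x) \<notin> ?R\<^sup>*" using nxy rt_sym by metis
      have "\<exists>T. host_tree V E T \<and> w \<in> path_verts T v u"
        using exchange[OF ht0 H2 yxT yB xB BV nG2 rt_sym[OF yv] rt_sym[OF ux] wy nyx wB vV hg] .
      then obtain T where T: "host_tree V E T" "w \<in> path_verts T v u" by (elim exE conjE)
      have "w \<in> path_verts T u v" using T(2) by (rule path_verts_sym)
      then show ?thesis using T(1) by (intro exI[of _ T] conjI)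
    qed
  qed
  show ?thesis
  proof
    show "B \<subseteq> \<Union> {path_verts T u v | T. host_tree V E T}"
    proof
      fix w assume "w \<in> B"
      then obtain T where "host_tree V E T" "w \<in> path_verts T u v" using sub by blast
      then show "w \<in> \<Union> {path_verts T u v | T. host_tree V E T}" by blast
    qed
  next
    show "\<Union> {path_verts T u v | T. host_tree V E T} \<subseteq> B" using sup by blast
  qed
qed

end
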